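(* Let $k,m\in\mathbb{N}$ with $k>m$, $k$ even, $\frac{2k+1}{4m}<1$ and $\gcd(4m,2k+1)=1$. For $s=0,\dots,4m-1$ and $n=0,\dots,2k$ put $\widetilde X_{sn}=\frac{s}{4m}-\frac{n}{2k+1}$ and $\widetilde\Phi_{sn}(0,0)=\sum_{l\in\mathbb{Z}}Q_2\big(2(l+\widetilde X_{sn})\big)$ with $Q_2(x)=(1-|x|)\chi_{[-1,1]}(x)$. Let $\widetilde A$ be the $(2m-1)\times k$ matrix with entries $\widetilde A_{sn}=\widetilde\Phi_{sn}(0,0)-\widetilde\Phi_{s,2k+1-n}(0,0)$, $s=1,\dots,2m-1$, $n=1,\dots,k$. Then $\operatorname{rank}(\widetilde A)\le k-1$.
   Context: This corresponds to the Gabor system of $Q_2$ with $a=\frac{1}{2m}$, $b=\frac{2k+1}{2}$, $ab=\frac{2k+1}{4m}$. *)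

theory Defs
  imports "HOL-Analysis.Analysis" "Jordan_Normal_Form.DL_Rank"
begin

definition Q2 :: "real \<Rightarrow> real" where
  "Q2 x = (if \<bar>x\<bar> \<le> 1 then 1 - \<bar>x\<bar> else 0)"

definition Xt :: "nat \<Rightarrow> nat \<Rightarrow> nat \<Rightarrow> int \<Rightarrow> real" where
  "Xt m k s n = real s / (4 * real m) - real_of_int n / (2 * real k + 1)"

definition Phit :: "nat \<Rightarrow> nat \<Rightarrow> nat \<Rightarrow> int \<Rightarrow> real" where
  "Phit m k s n = (\<Sum>\<^sub>\<infinity>l::int. Q2 (2 * (real_of_int l + Xt m k s n)))"

definition At :: "nat \<Rightarrow> nat \<Rightarrow> real mat" where
  "At m k = mat (2 * m - 1) k
     (\<lambda>(i, j). Phit m k (i + 1) (int (j + 1)) - Phit m k (i + 1) (2 * int k + 1 - int (j + 1)))"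

end

theory Submission imports Defs begin

lemma rank_sum_products:
  fixes f g :: "nat \<Rightarrow> nat \<Rightarrow> real"
  shows "vec_space.rank n (mat n nc (\<lambda>(r,c). \<Sum>t<q. f t r * g t c)) \<le> q"
proof (induction q)
  case 0
  have "mat n nc (\<lambda>(r,c). \<Sum>t<0. f t r * g t c) = 0\<^sub>m n nc"
    by (rule eq_matI) auto
  then show ?case using vec_space.rank_0I by (metis le_refl)
next
  case (Suc q)
  have eq: "mat n nc (\<lambda>(r,c). \<Sum>t<Suc q. f t r * g t c) =
     mat n nc (\<lambda>(r,c). \<Sum>t<q. f t r * g t c) + mat n nc (\<lambda>(r,c). f q r * g q c)"
    by (rule eq_matI) auto
  have "vec_space.rank n (mat n nc (\<lambda>(r,c). f q r * g q c)) \<le> 1"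
    by (rule vec_space.rank_le_1_product_entries[where f="f q" and g="g q" and nc=nc]) auto
  moreover have "vec_space.rank n (mat n nc (\<lambda>(r,c). \<Sum>t<Suc q. f t r * g t c)) \<le>
     vec_space.rank n (mat n nc (\<lambda>(r,c). \<Sum>t<q. f t r * g t c)) + vec_space.rank n (mat n nc (\<lambda>(r,c). f q r * g q c))"
    unfolding eq by (rule vec_space.rank_subadditive) auto
  ultimately show ?case using Suc by linarith
qed

definition TT :: "real \<Rightarrow> real" where
  "TT x = (\<Sum>\<^sub>\<infinity>l::int. Q2 (2 * (real_of_int l + x)))"

lemma Q2_even: "Q2 (- y) = Q2 y" unfolding Q2_def by simp

lemma TT_summable: "(\<lambda>l::int. Q2 (2 * (real_of_int l + x))) summable_on UNIV"
proof -
  let ?F = "{floor (-x) - 1 .. ceiling (-x) + 1}"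
  have "(\<lambda>l::int. Q2 (2 * (real_of_int l + x))) summable_on ?F" by simp
  moreover have "\<And>l. l \<in> UNIV - ?F \<Longrightarrow> Q2 (2 * (real_of_int l + x)) = 0"
  proof -
    fix l :: int assume "l \<in> UNIV - ?F"
    then have "l < floor (-x) - 1 \<or> l > ceiling (-x) + 1" by auto
    moreover have "real_of_int (floor (-x)) \<le> -x" by (rule of_int_floor_le)
    moreover have "-x \<le> real_of_int (ceiling (-x))" by (rule le_of_int_ceiling)
    ultimately have "real_of_int l < -x - 1 \<or> real_of_int l > -x + 1"
    proof (elim disjE)
      assume "l < floor (-x) - 1" "real_of_int (floor (-x)) \<le> -x"
      then have "real_of_int l < real_of_int (floor (-x) - 1)" by simp
      then have "real_of_int l < -x - 1" using \<open>real_of_int (floor (-x)) \<le> -x\<close> by linarith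
      then show ?thesis by blast
    next
      assume "l > ceiling (-x) + 1" "-x \<le> real_of_int (ceiling (-x))"
      then have "real_of_int l > real_of_int (ceiling (-x) + 1)" by simp
      then have "real_of_int l > -x + 1" using \<open>-x \<le> real_of_int (ceiling (-x))\<close> by linarith
      then show ?thesis by blast
    qed
    then show "Q2 (2 * (real_of_int l + x)) = 0" unfolding Q2_def by auto
  qed
  ultimately show ?thesis
    using summable_on_cong_neutral[where S = ?F and T = UNIV and f = "\<lambda>l::int. Q2 (2 * (real_of_int l + x))" and g = "\<lambda>l::int. Q2 (2 * (real_of_int l + x))"]
    by blast
qed

lemma TT_has_sum: "((\<lambda>l::int. Q2 (2 * (real_of_int l + x))) has_sum TT x) UNIV"
  unfolding TT_def using TT_summable by (rule has_sum_infsum)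

lemma TT_even: "TT (- x) = TT x"
proof -
  have "TT x = infsum (\<lambda>l::int. Q2 (2 * (real_of_int l + x))) (uminus ` UNIV)"
    unfolding TT_def by simp
  also have "\<dots> = infsum ((\<lambda>l::int. Q2 (2 * (real_of_int l + x))) \<circ> uminus) UNIV"
    by (rule infsum_reindex) simp
  also have "\<dots> = TT (- x)" unfolding TT_def
  proof (rule infsum_cong)
    fix l :: int
    have "2 * (real_of_int (-l) + x) = - (2 * (real_of_int l + -x))" by simp
    then show "((\<lambda>l::int. Q2 (2 * (real_of_int l + x))) \<circ> uminus) l = Q2 (2 * (real_of_int l + - x))"
      by (simp only: comp_apply Q2_even)
  qed
  finally show ?thesis by simp
qed

lemma D_has_sum: "((\<lambda>j::int. Q2 (real_of_int j + y)) has_sum 1) UNIV"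
proof -
  define f where "f = floor y"
  define t where "t = y - of_int f"
  have t: "0 \<le> t" "t < 1" unfolding t_def f_def by linarith+
  let ?S = "{-f, -f-1}"
  have "((\<lambda>j::int. Q2 (real_of_int j + y)) has_sum (\<Sum>j\<in>?S. Q2 (real_of_int j + y))) ?S"
    by (rule has_sum_finite) simp
  moreover have "(\<Sum>j\<in>?S. Q2 (real_of_int j + y)) = 1"
    using t unfolding Q2_def t_def by (simp add: f_def)
  ultimately have "((\<lambda>j::int. Q2 (real_of_int j + y)) has_sum 1) ?S" by simp
  moreover have "\<And>j. j \<in> UNIV - ?S \<Longrightarrow> Q2 (real_of_int j + y) = 0"
  proof -
    fix j :: int assume "j \<in> UNIV - ?S"
    then have "j + f \<ge> 1 \<or> j + f \<le> -2" by auto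
    then have "real_of_int (j + f) \<ge> 1 \<or> real_of_int (j + f) \<le> -2" by linarith
    moreover have "real_of_int j + y = real_of_int (j + f) + t" unfolding t_def by simp
    ultimately show "Q2 (real_of_int j + y) = 0" using t unfolding Q2_def by auto
  qed
  ultimately show ?thesis
    by (subst has_sum_cong_neutral[where S = UNIV and T = ?S and g = "\<lambda>j::int. Q2 (real_of_int j + y)"]) auto
qed

lemma TT_half: "TT x + TT (x + 1/2) = 1"
proof -
  let ?g = "\<lambda>j::int. Q2 (real_of_int j + 2 * x)"
  have e: "(?g has_sum TT x) ((\<lambda>l. 2 * l) ` UNIV)"
    apply (subst has_sum_reindex) apply (simp add: inj_on_def)
    using TT_has_sum[of x] by (simp add: comp_def algebra_simps)
  have o: "(?g has_sum TT (x + 1/2)) ((\<lambda>l. 2 * l + 1) ` UNIV)"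
    apply (subst has_sum_reindex) apply (simp add: inj_on_def)
    using TT_has_sum[of "x + 1/2"] by (simp add: comp_def algebra_simps)
  have disj: "(\<lambda>l::int. 2 * l) ` UNIV \<inter> (\<lambda>l. 2 * l + 1) ` UNIV = {}" by auto presburger
  have un: "(\<lambda>l::int. 2 * l) ` UNIV \<union> (\<lambda>l. 2 * l + 1) ` UNIV = UNIV"
  proof -
    have "j \<in> (\<lambda>l::int. 2 * l) ` UNIV \<union> (\<lambda>l. 2 * l + 1) ` UNIV" for j :: int
    proof (cases "even j")
      case True then show ?thesis by (auto elim!: evenE)
    next
      case False then show ?thesis by (auto elim!: oddE)
    qed
    then show ?thesis by auto
  qed
  have "(?g has_sum (TT x + TT (x + 1/2))) UNIV"
    using has_sum_Un_disjoint[OF e o disj] un by simp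
  then show ?thesis using D_has_sum[of "2 * x"] has_sum_unique by blast
qed

lemma Phit_TT: "Phit m k s n = TT (Xt m k s n)"
  unfolding Phit_def TT_def by simp

lemma y1: fixes m s :: nat assumes "1 \<le> s" "s < 2 * m"
  shows "real (2*m - s) / (4 * real m) = 1/2 - real s / (4 * real m)"
proof -
  have m: "real m > 0" using assms by simp
  have "real (2*m - s) = 2 * real m - real s" using assms by (simp add: of_nat_diff)
  then show ?thesis using m by (simp add: diff_divide_distrib)
qed

lemma y2: fixes k :: nat and n :: int
  shows "real_of_int (2 * int k + 1 - n) / (2 * real k + 1) = 1 - real_of_int n / (2 * real k + 1)"
proof -
  have N0: "2 * real k + 1 > 0" by simp
  then have N: "2 * real k + 1 \<noteq> 0" by linarith
  have "real_of_int (2 * int k + 1 - n) = (2 * real k + 1) - real_of_int n" by simp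
  then show ?thesis using N by (simp add: diff_divide_distrib)
qed

lemma row_sym:
  fixes k m s :: nat and n :: int
  assumes "1 \<le> s" "s < 2 * m"
  shows "Phit m k (2*m - s) n - Phit m k (2*m - s) (2 * int k + 1 - n) =
         Phit m k s n - Phit m k s (2 * int k + 1 - n)"
proof -
  define a where "a = real s / (4 * real m)"
  define b where "b = real_of_int n / (2 * real k + 1)"
  have x1: "Xt m k (2*m - s) n = 1/2 - a - b"
    unfolding Xt_def y1[OF assms] a_def b_def by simp
  have x2: "Xt m k (2*m - s) (2 * int k + 1 - n) = b - a - 1/2"
    unfolding Xt_def y1[OF assms] y2 a_def b_def by simp
  have x3: "Xt m k s n = a - b" unfolding Xt_def a_def b_def by simp
  have x4: "Xt m k s (2 * int k + 1 - n) = a + b - 1"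
    unfolding Xt_def y2 a_def b_def by simp
  have e1: "1/2 - a - b = - ((a + b - 1) + 1/2)" by simp
  have e2: "b - a - 1/2 = - ((a - b) + 1/2)" by simp
  have "TT (1/2 - a - b) = TT ((a + b - 1) + 1/2)"
    unfolding e1 by (rule TT_even)
  moreover have "TT (b - a - 1/2) = TT ((a - b) + 1/2)"
    unfolding e2 by (rule TT_even)
  ultimately show ?thesis unfolding Phit_TT x1 x2 x3 x4
    using TT_half[of "a + b - 1"] TT_half[of "a - b"] by linarith
qed

theorem lemma3p17:
  fixes k m :: nat
  assumes "k > m"
    and "even k"
    and "(2 * real k + 1) / (4 * real m) < 1"
    and "gcd (4 * m) (2 * k + 1) = 1"
  shows "vec_space.rank (2 * m - 1) (At m k) \<le> k - 1"
proof -
  define E where "E r c = Phit m k (r + 1) (int (c + 1)) - Phit m k (r + 1) (2 * int k + 1 - int (c + 1))" for r c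
  define p where "p r = min r (2 * m - 2 - r)" for r
  have Esym: "E (p r) c = E r c" if "r < 2 * m - 1" for r c
  proof (cases "r \<le> 2 * m - 2 - r")
    case True then show ?thesis unfolding p_def by simp
  next
    case False
    then have pr: "p r + 1 = 2 * m - (r + 1)" unfolding p_def using that by simp
    show ?thesis unfolding E_def pr
      by (rule row_sym) (use that in auto)
  qed
  have pm: "p r < m" if "r < 2 * m - 1" for r unfolding p_def using that by simp
  have "At m k = mat (2 * m - 1) k (\<lambda>(r, c). \<Sum>t<m. (if t = p r then 1 else 0) * E t c)"
  proof (rule eq_matI)
    fix i j assume ij: "i < dim_row (mat (2 * m - 1) k (\<lambda>(r, c). \<Sum>t<m. (if t = p r then 1 else 0) * E t c))"
      "j < dim_col (mat (2 * m - 1) k (\<lambda>(r, c). \<Sum>t<m. (if t = p r then 1 else 0) * E t c))"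
    then have i: "i < 2 * m - 1" and j: "j < k" by auto
    have A: "At m k $$ (i, j) = E i j" using i j unfolding At_def E_def by (simp only: index_mat split)
    have "(\<Sum>t<m. (if t = p i then 1 else 0) * E t j) = (\<Sum>t<m. if t = p i then E t j else 0)"
      by (rule sum.cong) auto
    also have "\<dots> = E (p i) j" using pm[OF i] by (simp add: sum.delta')
    also have "\<dots> = E i j" using Esym[OF i] .
    finally have S: "(\<Sum>t<m. (if t = p i then 1 else 0) * E t j) = E i j" .
    show "At m k $$ (i, j) = mat (2 * m - 1) k (\<lambda>(r, c). \<Sum>t<m. (if t = p r then 1 else 0) * E t c) $$ (i, j)"
      using i j A S by (simp only: index_mat split)
  qed (auto simp: At_def)
  moreover have "vec_space.rank (2 * m - 1) (mat (2 * m - 1) k (\<lambda>(r, c). \<Sum>t<m. (if t = p r then 1 else 0) * E t c)) \<le> m"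
    by (rule rank_sum_products)
  ultimately have "vec_space.rank (2 * m - 1) (At m k) \<le> m" by (simp only:)
  moreover have "m \<le> k - 1" using assms(1) by simp
  ultimately show ?thesis by (rule order_trans)
qed

end
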